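(* Let $n=p_1^{r_1}p_2^{r_2}\cdots p_k^{r_k}$, where $k\ge1$, $p_1,\ldots,p_k$ are distinct primes and $r_1\ge r_2\ge\cdots\ge r_k\ge1$. If $n$ is not prime, then $$F(G(n))=\sum_{\substack{i_1<i_2<\cdots<i_s\\ \emptyset\ne\{i_1,\ldots,i_s\}\subseteq\{1,\ldots,k\}}} r_{i_1}r_{i_2}\cdots r_{i_s}\,x_{i_1}x_{i_2}\cdots x_{i_s}.$$ If $n$ is prime, then $F(G(n))=1$.
   Context: For an integer $n\ge2$, $G(n)$ is the simple undirected graph whose vertex set is the set of divisors of $n$ greater than $1$, two distinct vertices $a,b$ adjacent iff $\gcd(a,b)>1$. A clique is a set of pairwise adjacent vertices; a set $S$ of cliques of $G$ is a total clique covering if every vertex lies in some member of $S$ and every edge has both endpoints in some member of $S$; $\theta_t(G)$ is the minimum size of a total clique covering. The code $\sigma(G)$ of a graph $G$ with $m$ vertices and $s\ge0$ isolated vertices: let $k'=\theta_t(G)-s$; for each total clique covering $S=\{C_1,\ldots,C_{s+k'}\}$ with $|S|=\theta_t(G)$ (where $C_1,\ldots,C_s$ are the singletons of the isolated vertices) and each bijective assignment of the first $k'$ primes to $C_{s+1},\ldots,C_{s+k'}$, label each isolated vertex by $1$ and each other vertex $v$ by the product of primes assigned to the cliques among $C_{s+1},\ldots,C_{s+k'}$ containing $v$, and list the labels in non-decreasing order; $\sigma[S]$ is the lexicographically least sequence so obtained from $S$, and $\sigma(G)$ is the lexicographically least among all $\sigma[S]$ with $|S|=\theta_t(G)$. The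 normal polynomial representation $F(G)\in\mathbb{Z}_{\ge0}[x_1,x_2,\ldots]$ is $\sum_{\lambda} m(\lambda)$, summed over the entries $\lambda$ of $\sigma(G)$ (with multiplicity), where $m(1)=1$ and $m(q_{j_1}q_{j_2}\cdots q_{j_r})=x_{j_1}x_{j_2}\cdots x_{j_r}$ for distinct indices $j_1,\ldots,j_r$, $q_j$ denoting the $j$-th prime. *)

theory Defs
  imports Main "HOL-Computational_Algebra.Primes" "HOL-Library.Multiset"
    "HOL-Library.List_Lexorder" "HOL-Library.Infinite_Set"
begin

definition is_clique :: "'a set \<Rightarrow> ('a \<Rightarrow> 'a \<Rightarrow> bool) \<Rightarrow> 'a set \<Rightarrow> bool" where
  "is_clique V E C \<longleftrightarrow> C \<subseteq> V \<and> (\<forall>a\<in>C. \<forall>b\<in>C. a \<noteq> b \<longrightarrow> E a b)"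

definition total_clique_covering :: "'a set \<Rightarrow> ('a \<Rightarrow> 'a \<Rightarrow> bool) \<Rightarrow> 'a set set \<Rightarrow> bool" where
  "total_clique_covering V E S \<longleftrightarrow>
     (\<forall>C\<in>S. is_clique V E C) \<and>
     (\<forall>v\<in>V. \<exists>C\<in>S. v \<in> C) \<and>
     (\<forall>a\<in>V. \<forall>b\<in>V. a \<noteq> b \<and> E a b \<longrightarrow> (\<exists>C\<in>S. a \<in> C \<and> b \<in> C))"

definition theta_t :: "'a set \<Rightarrow> ('a \<Rightarrow> 'a \<Rightarrow> bool) \<Rightarrow> nat" where
  "theta_t V E = (LEAST m. \<exists>S. finite S \<and> total_clique_covering V E S \<and> card S = m)"

definition isolated_vertices :: "'a set \<Rightarrow> ('a \<Rightarrow> 'a \<Rightarrow> bool) \<Rightarrow> 'a set" where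
  "isolated_vertices V E = {v \<in> V. \<forall>u\<in>V. u \<noteq> v \<longrightarrow> \<not> E v u}"

text \<open>The j-th prime, 1-indexed: qprime 1 = 2, qprime 2 = 3, ...\<close>
definition qprime :: "nat \<Rightarrow> nat" where
  "qprime j = enumerate {p::nat. prime p} (j - 1)"

definition nonisolated_cliques :: "'a set \<Rightarrow> ('a \<Rightarrow> 'a \<Rightarrow> bool) \<Rightarrow> 'a set set \<Rightarrow> 'a set set" where
  "nonisolated_cliques V E S = S - (\<lambda>v. {v}) ` isolated_vertices V E"

definition vertex_label :: "'a set \<Rightarrow> ('a \<Rightarrow> 'a \<Rightarrow> bool) \<Rightarrow> 'a set set \<Rightarrow> ('a set \<Rightarrow> nat) \<Rightarrow> 'a \<Rightarrow> nat" where
  "vertex_label V E S f v =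
     (if v \<in> isolated_vertices V E then 1
      else (\<Prod>C\<in>{C \<in> nonisolated_cliques V E S. v \<in> C}. qprime (f C)))"

definition label_seq :: "'a set \<Rightarrow> ('a \<Rightarrow> 'a \<Rightarrow> bool) \<Rightarrow> 'a set set \<Rightarrow> ('a set \<Rightarrow> nat) \<Rightarrow> nat list" where
  "label_seq V E S f = sorted_list_of_multiset (image_mset (vertex_label V E S f) (mset_set V))"

text \<open>sigma[S]: lexicographically least sequence over all bijective prime assignments.\<close>
definition sigma_S :: "'a set \<Rightarrow> ('a \<Rightarrow> 'a \<Rightarrow> bool) \<Rightarrow> 'a set set \<Rightarrow> nat list" where
  "sigma_S V E S = Min {label_seq V E S f | f.
      bij_betw f (nonisolated_cliques V E S) {1..theta_t V E - card (isolated_vertices V E)}}"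

definition sigma_code :: "'a set \<Rightarrow> ('a \<Rightarrow> 'a \<Rightarrow> bool) \<Rightarrow> nat list" where
  "sigma_code V E = Min {sigma_S V E S | S.
      finite S \<and> total_clique_covering V E S \<and> card S = theta_t V E}"

text \<open>Every monomial m(lambda) is squarefree, x_{j1}...x_{jr}
  with distinct indices, so it is represented by its index set {j1,...,jr} (the monomial 1 is {}),
  and the polynomial (a sum of such monomials with nonnegative coefficients) by the multiset of
  monomials.\<close>
definition monomial_of :: "nat \<Rightarrow> nat set" where
  "monomial_of lam = {j. j \<ge> 1 \<and> qprime j dvd lam}"

definition normal_poly_rep :: "'a set \<Rightarrow> ('a \<Rightarrow> 'a \<Rightarrow> bool) \<Rightarrow> nat set multiset" where
  "normal_poly_rep V E = image_mset monomial_of (mset (sigma_code V E))"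

definition divgraph_V :: "nat \<Rightarrow> nat set" where
  "divgraph_V n = {d. d dvd n \<and> d > 1}"

definition divgraph_E :: "nat \<Rightarrow> nat \<Rightarrow> bool" where
  "divgraph_E a b \<longleftrightarrow> gcd a b > 1"

definition F_G :: "nat \<Rightarrow> nat set multiset" where
  "F_G n = normal_poly_rep (divgraph_V n) divgraph_E"

end

theory Submission
  imports Defs "HOL-Library.FuncSet"
begin

lemma count_image_mset_set:
  assumes "finite A"
  shows "count (image_mset f (mset_set A)) x = card {a\<in>A. f a = x}"
proof -
  have "count (image_mset f (mset_set A)) x = (\<Sum>y\<in>f -` {x} \<inter> A. 1)"
    unfolding count_image_mset using assms by (intro sum.cong) auto
  also have "f -` {x} \<inter> A = {a\<in>A. f a = x}" by blast
  finally show ?thesis by simp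
qed

lemma qprime_prime: "prime (qprime j)"
  unfolding qprime_def using enumerate_in_set[OF primes_infinite] by auto

lemma qprime_less: "1 \<le> i \<Longrightarrow> i < j \<Longrightarrow> qprime i < qprime j"
  unfolding qprime_def using enumerate_mono[OF _ primes_infinite] by auto

lemma qprime_inj: "1 \<le> i \<Longrightarrow> 1 \<le> j \<Longrightarrow> qprime i = qprime j \<Longrightarrow> i = j"
  by (metis linorder_neqE_nat nat_less_le qprime_less)

lemma monomial_of_prod:
  assumes "finite A" "\<forall>a\<in>A. 1 \<le> a"
  shows "monomial_of (\<Prod>a\<in>A. qprime a) = A"
proof -
  have "j \<in> A" if "1 \<le> j" "qprime j dvd (\<Prod>a\<in>A. qprime a)" for j
  proof -
    from that(2) obtain a where "a \<in> A" "qprime j dvd qprime a"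
      using prime_dvd_prod_iff[OF assms(1) qprime_prime] by blast
    then have "qprime j = qprime a" using primes_dvd_imp_eq qprime_prime by blast
    then show ?thesis using qprime_inj[OF that(1)] assms(2) \<open>a\<in>A\<close> by metis
  qed
  moreover have "qprime j dvd (\<Prod>a\<in>A. qprime a)" if "j \<in> A" for j
    using that assms(1) by (simp add: dvd_prodI)
  ultimately show ?thesis unfolding monomial_of_def using assms(2) by auto
qed

lemma prod_qprime_ge:
  assumes "finite A" "b \<in> A"
  shows "qprime b \<le> (\<Prod>a\<in>A. qprime a)"
proof -
  have "qprime b dvd (\<Prod>a\<in>A. qprime a)" using assms by (simp add: dvd_prodI)
  moreover have "(\<Prod>a\<in>A. qprime a) > 0" using qprime_prime
    by (simp add: prime_gt_0_nat prod_pos)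
  ultimately show ?thesis by (simp add: dvd_imp_le)
qed

lemma sorted_lex_less:
  fixes xs ys :: "nat list"
  assumes "sorted xs" "sorted ys" "length xs = length ys"
    "\<forall>u<v. count (mset xs) u = count (mset ys) u"
    "count (mset xs) v > count (mset ys) v"
  shows "xs < ys"
  using assms
proof (induction xs arbitrary: ys)
  case Nil
  then show ?case by simp
next
  case (Cons x xs)
  then obtain y ys' where ys: "ys = y # ys'" by (cases ys) auto
  have xmin: "\<forall>z\<in>set xs. x \<le> z" and ymin: "\<forall>z\<in>set ys'. y \<le> z"
    using Cons.prems ys by auto
  have vin: "v \<in> set (x#xs)" using Cons.prems(5)
    by (metis count_greater_zero_iff gr_zeroI less_nat_zero_code set_mset_mset)
  have xv: "x \<le> v" using vin xmin by auto
  consider "x < y" | "x = y" | "y < x" by arith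
  then show ?case
  proof cases
    case 1 then show ?thesis using ys by simp
  next
    case 3
    have "y \<in># mset ys" using ys by simp
    then have cy: "count (mset ys) y > 0" by simp
    show ?thesis
    proof (cases "y < v")
      case True
      then have "count (mset (x#xs)) y > 0" using Cons.prems(4) cy by simp
      then have "y \<in> set (x#xs)" by (metis count_greater_zero_iff set_mset_mset)
      then show ?thesis using xmin 3 by auto
    next
      case False
      then show ?thesis using xv 3 by simp
    qed
  next
    case 2
    have "xs < ys'"
    proof (rule Cons.IH)
      show "sorted xs" "sorted ys'" "length xs = length ys'" using Cons.prems ys by auto
      show "\<forall>u<v. count (mset xs) u = count (mset ys') u"
        using Cons.prems(4) ys 2 by (auto split: if_splits)
      show "count (mset ys') v < count (mset xs) v"
      proof (cases "x = v")
        case True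
        then have "count (mset ys) v \<ge> 1" using ys 2 by simp
        then show ?thesis using Cons.prems(5) ys 2 True by simp
      next
        case False
        then show ?thesis using Cons.prems(5) ys 2 by simp
      qed
    qed
    then show ?thesis using ys 2 by simp
  qed
qed



locale dg =
  fixes n k :: nat and p r :: "nat \<Rightarrow> nat"
  assumes k1: "k \<ge> 1"
    and pr: "\<forall>i\<in>{1..k}. prime (p i)"
    and pinj: "inj_on p {1..k}"
    and r1: "\<forall>i\<in>{1..k}. r i \<ge> 1"
    and rmono: "\<forall>i j. 1 \<le> i \<and> i \<le> j \<and> j \<le> k \<longrightarrow> r j \<le> r i"
    and ndef: "n = (\<Prod>i=1..k. p i ^ r i)"
begin

abbreviation "I \<equiv> {1..k}"
abbreviation "V \<equiv> divgraph_V n"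
definition supp :: "nat \<Rightarrow> nat set" where "supp d = {i\<in>I. p i dvd d}"
definition D :: "nat \<Rightarrow> nat set" where "D i = {d\<in>V. p i dvd d}"

lemma n_pos: "n > 0"
  unfolding ndef using pr by (simp add: prime_gt_0_nat prod_pos)

lemma prime_dvd_n: "prime q \<Longrightarrow> q dvd n \<Longrightarrow> \<exists>i\<in>I. q = p i"
proof -
  assume q: "prime q" "q dvd n"
  then obtain i where i: "i \<in> I" "q dvd p i ^ r i"
    unfolding ndef using prime_dvd_prod_iff[of I q] by auto
  then have "q dvd p i" using q prime_dvd_power by blast
  then have "q = p i" using q pr i primes_dvd_imp_eq by blast
  then show ?thesis using i by blast
qed

lemma p_dvd_n: "i \<in> I \<Longrightarrow> p i dvd n"
proof -
  assume i: "i \<in> I"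
  have "p i dvd p i ^ r i" using r1 i by (intro dvd_power) (auto, force)
  also have "\<dots> dvd n" unfolding ndef using i by (intro dvd_prodI) auto
  finally show ?thesis .
qed

lemma p_gt1: "i \<in> I \<Longrightarrow> p i > 1" using pr prime_gt_1_nat by blast

lemma p_in_V: "i \<in> I \<Longrightarrow> p i \<in> V"
  unfolding divgraph_V_def using p_dvd_n p_gt1 by auto

lemma p_dvd_p: "i \<in> I \<Longrightarrow> j \<in> I \<Longrightarrow> p i dvd p j \<Longrightarrow> i = j"
  using pr pinj primes_dvd_imp_eq inj_on_def by metis

lemma V_supp: "d \<in> V \<Longrightarrow> supp d \<noteq> {}"
proof -
  assume d: "d \<in> V"
  then have "d \<noteq> 1" "d dvd n" unfolding divgraph_V_def by auto
  then obtain q where "prime q" "q dvd d" using prime_factor_nat by blast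
  moreover then have "q dvd n" using \<open>d dvd n\<close> by auto
  ultimately show ?thesis using prime_dvd_n unfolding supp_def by blast
qed

lemma V_pos: "d \<in> V \<Longrightarrow> d > 0" unfolding divgraph_V_def by auto

lemma mult_prod:
  assumes "J \<subseteq> I" "prime q"
  shows "multiplicity q (\<Prod>i\<in>J. p i ^ e i) = (\<Sum>i\<in>J. if q = p i then e i else 0)"
proof -
  have fin: "finite J" using assms(1) finite_subset by blast
  have "\<forall>i\<in>J. p i > 0" using assms(1) pr prime_gt_0_nat by blast
  then have "0 \<notin> (\<lambda>i. p i ^ e i) ` J" by auto
  then have "multiplicity q (\<Prod>i\<in>J. p i ^ e i) = (\<Sum>i\<in>J. multiplicity q (p i ^ e i))"
    using prime_elem_multiplicity_prod_distrib[OF _ _ fin] assms(2) by auto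
  also have "\<dots> = (\<Sum>i\<in>J. if q = p i then e i else 0)"
    using assms pr by (intro sum.cong) (auto simp: multiplicity_distinct_prime_power)
  finally show ?thesis .
qed

lemma mult_prod_in:
  assumes "J \<subseteq> I" "l \<in> J"
  shows "multiplicity (p l) (\<Prod>i\<in>J. p i ^ e i) = e l"
proof -
  have fin: "finite J" using assms(1) finite_subset by blast
  have "prime (p l)" using assms pr by auto
  then have "multiplicity (p l) (\<Prod>i\<in>J. p i ^ e i) = (\<Sum>i\<in>J. if p l = p i then e i else 0)"
    using mult_prod assms by blast
  also have "\<dots> = (\<Sum>i\<in>J. if i = l then e l else 0)"
    using assms pinj by (intro sum.cong) (auto simp: inj_on_def)
  also have "\<dots> = e l" using fin assms by simp
  finally show ?thesis .
qed

lemma mult_prod_out: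
  assumes "J \<subseteq> I" "prime q" "q \<notin> p ` J"
  shows "multiplicity q (\<Prod>i\<in>J. p i ^ e i) = 0"
  using mult_prod[OF assms(1,2)] assms(3) by (auto intro!: sum.neutral)

lemma mult_n: "l \<in> I \<Longrightarrow> multiplicity (p l) n = r l"
  unfolding ndef using mult_prod_in[of I l r] by simp

end

context dg begin

lemma count_supp:
  assumes J: "J \<subseteq> I" "J \<noteq> {}"
  shows "card {d\<in>V. supp d = J} = (\<Prod>i\<in>J. r i)"
proof -
  define P where "P = PiE J (\<lambda>i. {1..r i})"
  define g where "g = (\<lambda>e. \<Prod>i\<in>J. p i ^ e i)"
  have fin: "finite J" using J finite_subset by blast
  have ppos: "\<forall>i\<in>J. p i > 0" using J(1) pr prime_gt_0_nat by blast
  have g_pos: "g e > 0" for e unfolding g_def using ppos by (auto intro!: prod_pos)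
  have inj: "inj_on g P"
  proof (rule inj_onI)
    fix e e' assume "e \<in> P" "e' \<in> P" "g e = g e'"
    show "e = e'"
    proof (rule PiE_ext)
      show "e \<in> PiE J (\<lambda>i. {1..r i})" "e' \<in> PiE J (\<lambda>i. {1..r i})" using \<open>e \<in> P\<close> \<open>e' \<in> P\<close> P_def by auto
      fix i assume "i \<in> J"
      then have "e i = multiplicity (p i) (g e)" "e' i = multiplicity (p i) (g e')"
        unfolding g_def using mult_prod_in[OF J(1)] by auto
      then show "e i = e' i" using \<open>g e = g e'\<close> by simp
    qed
  qed
  have img: "g ` P = {d\<in>V. supp d = J}"
  proof
    show "g ` P \<subseteq> {d\<in>V. supp d = J}"
    proof
      fix d assume "d \<in> g ` P"
      then obtain e where e: "e \<in> P" "d = g e" by blast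
      have "d dvd n"
      proof -
        have le: "e i \<le> r i" if "i \<in> J" for i using PiE_mem[OF e(1)[unfolded P_def] that] by simp
        have "(\<Prod>i\<in>J. p i ^ e i) dvd (\<Prod>i\<in>J. p i ^ r i)"
          by (rule prod_dvd_prod, rule le_imp_power_dvd, rule le)
        also have "\<dots> dvd n" unfolding ndef by (rule prod_dvd_prod_subset) (simp, use J(1) in simp)
        finally show ?thesis using e g_def by simp
      qed
      have supp: "supp d = J"
      proof
        show "supp d \<subseteq> J"
        proof
          fix l assume "l \<in> supp d"
          then have l: "l \<in> I" "p l dvd d" unfolding supp_def by auto
          have pl: "prime (p l)" using pr l(1) by blast
          have "d \<noteq> 0" using g_pos e by simp
          then have m: "multiplicity (p l) d > 0"
            using prime_multiplicity_gt_zero_iff[of "p l" d] pl l(2) prime_imp_prime_elem by blast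
          show "l \<in> J"
          proof (rule ccontr)
            assume "l \<notin> J"
            then have "p l \<notin> p ` J" using inj_on_image_mem_iff[OF pinj l(1) J(1)] by blast
            then have "multiplicity (p l) (g e) = 0" using mult_prod_out[OF J(1) pl] unfolding g_def by blast
            then show False using m e(2) by simp
          qed
        qed
        show "J \<subseteq> supp d"
        proof
          fix l assume l: "l \<in> J"
          have "multiplicity (p l) (g e) = e l" unfolding g_def by (rule mult_prod_in[OF J(1) l])
          then have "multiplicity (p l) d = e l" using e(2) by simp
          moreover have "e l \<ge> 1" using PiE_mem[OF e(1)[unfolded P_def] l] by simp
          ultimately have m: "multiplicity (p l) d > 0" by simp
          have "prime (p l)" using pr J(1) l by blast
          then have "p l dvd d" using prime_multiplicity_gt_zero_iff[of "p l" d] m g_pos e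
            by (metis gr_implies_not0 prime_imp_prime_elem)
          then show "l \<in> supp d" using l J unfolding supp_def by auto
        qed
      qed
      have "d > 1"
      proof -
        obtain l where "l \<in> J" using J by auto
        then have "p l dvd d" using supp unfolding supp_def by auto
        moreover have "d > 0" using g_pos e by simp
        ultimately have "p l \<le> d" by (simp add: dvd_imp_le)
        moreover have "p l > 1" using p_gt1 \<open>l\<in>J\<close> J(1) by blast
        ultimately show ?thesis by linarith
      qed
      then show "d \<in> {d\<in>V. supp d = J}" using \<open>d dvd n\<close> supp unfolding divgraph_V_def by auto
    qed
    show "{d\<in>V. supp d = J} \<subseteq> g ` P"
    proof
      fix d assume d: "d \<in> {d\<in>V. supp d = J}"
      define e where "e = (\<lambda>i. if i \<in> J then multiplicity (p i) d else undefined)"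
      have dpos: "d > 0" using d V_pos by auto
      have dn: "d dvd n" using d unfolding divgraph_V_def by auto
      have eP: "e \<in> P" unfolding P_def
      proof (rule PiE_I)
        fix i assume i: "i \<in> J"
        then have "p i dvd d" using d unfolding supp_def by auto
        moreover have "prime (p i)" using pr i J by auto
        ultimately have "multiplicity (p i) d > 0" using prime_multiplicity_gt_zero_iff[of "p i" d] dpos
          by (metis gr_implies_not0 prime_imp_prime_elem)
        then have "multiplicity (p i) d \<ge> 1" by simp
        moreover have "multiplicity (p i) d \<le> r i"
        proof -
          have "multiplicity (p i) d \<le> multiplicity (p i) n" using dvd_imp_multiplicity_le[OF dn] n_pos by simp
          also have "\<dots> = r i" using mult_n i J by auto
          finally show ?thesis .
        qed
        ultimately show "e i \<in> {1..r i}" using i e_def by auto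
      qed (auto simp: e_def)
      have "d = g e"
      proof -
        have "normalize d = normalize (g e)"
        proof (rule multiplicity_eq_imp_eq)
          show "d \<noteq> 0" "g e \<noteq> 0" using dpos g_pos by auto
          fix q :: nat assume q: "prime q"
          show "multiplicity q d = multiplicity q (g e)"
          proof (cases "q \<in> p ` J")
            case True
            then obtain l where l: "l \<in> J" "q = p l" by auto
            then show ?thesis using mult_prod_in[OF J(1) l(1)] unfolding g_def e_def by simp
          next
            case False
            have "\<not> q dvd d"
            proof
              assume "q dvd d"
              moreover have "q dvd n" using \<open>q dvd d\<close> dn by (rule dvd_trans)
              ultimately obtain i where i: "i \<in> I" "q = p i" using prime_dvd_n q by blast
              then have "i \<in> supp d" using \<open>q dvd d\<close> unfolding supp_def by auto
              then show False using d False i by auto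
            qed
            then have "multiplicity q d = 0" by (simp add: not_dvd_imp_multiplicity_0)
            then show ?thesis using mult_prod_out[OF J(1) q False] unfolding g_def by simp
          qed
        qed
        then show ?thesis by simp
      qed
      then show "d \<in> g ` P" using eP by blast
    qed
  qed
  have "card {d\<in>V. supp d = J} = card P" using img inj card_image by fastforce
  also have "\<dots> = (\<Prod>i\<in>J. r i)" unfolding P_def using fin by (simp add: card_PiE)
  finally show ?thesis .
qed

end

context dg begin

lemma n_in_V: "n \<in> V"
proof -
  have "p 1 \<in> V" using p_in_V k1 by auto
  then have "p 1 \<le> n" using p_dvd_n k1 n_pos by (simp add: dvd_imp_le)
  then show ?thesis using p_gt1[of 1] k1 unfolding divgraph_V_def by auto
qed

lemma gcd_prime_gt1: "i \<in> I \<Longrightarrow> p i dvd a \<Longrightarrow> p i dvd b \<Longrightarrow> a > 0 \<Longrightarrow> gcd a b > 1"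
proof -
  assume i: "i \<in> I" and a: "p i dvd a" "p i dvd b" "a > 0"
  have "p i dvd gcd a b" using a by simp
  moreover have "gcd a b > 0" using a(3) by simp
  ultimately have "p i \<le> gcd a b" by (simp add: dvd_imp_le)
  then show ?thesis using p_gt1[OF i] by linarith
qed

lemma gcd_gt1_common: "a \<in> V \<Longrightarrow> gcd a b > 1 \<Longrightarrow> \<exists>i\<in>I. p i dvd a \<and> p i dvd b"
proof -
  assume a: "a \<in> V" "gcd a b > 1"
  then obtain q where q: "prime q" "q dvd gcd a b" using prime_factor_nat[of "gcd a b"] by auto
  have "a dvd n" using a unfolding divgraph_V_def by simp
  then have "q dvd n" using q(2) by (meson dvd_trans gcd_dvd1)
  then obtain i where "i \<in> I" "q = p i" using prime_dvd_n q(1) by blast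
  then show ?thesis using q(2) by auto
qed

lemma p_adj: "i \<in> I \<Longrightarrow> j \<in> I \<Longrightarrow> divgraph_E (p i) (p j) \<Longrightarrow> i = j"
proof -
  assume ij: "i \<in> I" "j \<in> I" "divgraph_E (p i) (p j)"
  then obtain l where l: "l \<in> I" "p l dvd p i" "p l dvd p j"
    using gcd_gt1_common[OF p_in_V[OF ij(1)]] unfolding divgraph_E_def by blast
  then show ?thesis using p_dvd_p ij by metis
qed

lemma no_isolated:
  assumes "\<not> prime n"
  shows "isolated_vertices V divgraph_E = {}"
proof -
  have "\<exists>u\<in>V. u \<noteq> d \<and> divgraph_E d u" if d: "d \<in> V" for d
  proof -
    obtain i where i: "i \<in> I" "p i dvd d" using V_supp[OF d] unfolding supp_def by auto
    have dpos: "d > 0" using V_pos d by simp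
    show ?thesis
    proof (cases "d = p i")
      case False
      have "divgraph_E d (p i)" unfolding divgraph_E_def using gcd_prime_gt1[OF i(1) i(2) dvd_refl dpos] by simp
      moreover have "p i \<noteq> d" using False by simp
      ultimately show ?thesis using p_in_V[OF i(1)] by blast
    next
      case True
      then have "n \<noteq> d" using assms pr i(1) by auto
      moreover have "divgraph_E d n" unfolding divgraph_E_def
        using gcd_prime_gt1[OF i(1) i(2) p_dvd_n[OF i(1)] dpos] .
      ultimately show ?thesis using n_in_V by blast
    qed
  qed
  then show ?thesis unfolding isolated_vertices_def by blast
qed

lemma D_clique: "i \<in> I \<Longrightarrow> is_clique V divgraph_E (D i)"
proof -
  assume i: "i \<in> I"
  have "gcd a b > 1" if "a \<in> D i" "b \<in> D i" for a b
  proof -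
    have "a \<in> V" "p i dvd a" "p i dvd b" using that unfolding D_def by auto
    then show ?thesis using gcd_prime_gt1[OF i] V_pos by blast
  qed
  moreover have "D i \<subseteq> V" unfolding D_def by blast
  ultimately show ?thesis unfolding is_clique_def divgraph_E_def by blast
qed

lemma p_in_D: "i \<in> I \<Longrightarrow> p i \<in> D i"
  unfolding D_def using p_in_V by auto

lemma p_in_D_iff: "i \<in> I \<Longrightarrow> j \<in> I \<Longrightarrow> p i \<in> D j \<longleftrightarrow> i = j"
proof -
  assume ij: "i \<in> I" "j \<in> I"
  have "p i \<in> D j \<longleftrightarrow> p j dvd p i" unfolding D_def using p_in_V[OF ij(1)] by simp
  also have "\<dots> \<longleftrightarrow> i = j" using p_dvd_p[OF ij(2,1)] by auto
  finally show ?thesis .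
qed

lemma D_inj: "inj_on D I"
  by (rule inj_onI) (metis p_in_D p_in_D_iff)

lemma D_tcc: "total_clique_covering V divgraph_E (D ` I)"
proof -
  have 1: "\<forall>C\<in>D ` I. is_clique V divgraph_E C" using D_clique by blast
  have 2: "\<exists>C\<in>D ` I. v \<in> C" if v: "v \<in> V" for v
  proof -
    obtain i where i: "i \<in> I" "p i dvd v" using V_supp[OF v] unfolding supp_def by auto
    then have "v \<in> D i" using v unfolding D_def by simp
    then show ?thesis using i(1) by (intro bexI[of _ "D i"]) auto
  qed
  have 3: "\<exists>C\<in>D ` I. a \<in> C \<and> b \<in> C" if ab: "a \<in> V" "b \<in> V" "divgraph_E a b" for a b
  proof -
    obtain i where i: "i \<in> I" "p i dvd a" "p i dvd b"
      using gcd_gt1_common[OF ab(1)] ab(3) unfolding divgraph_E_def by blast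
    then have "a \<in> D i" "b \<in> D i" using ab unfolding D_def by simp_all
    then show ?thesis using i(1) by (intro bexI[of _ "D i"]) auto
  qed
  have c2: "\<forall>v\<in>V. \<exists>C\<in>D ` I. v \<in> C"
  proof
    fix v assume "v \<in> V" then show "\<exists>C\<in>D ` I. v \<in> C" by (rule 2)
  qed
  have c3: "\<forall>a\<in>V. \<forall>b\<in>V. a \<noteq> b \<and> divgraph_E a b \<longrightarrow> (\<exists>C\<in>D ` I. a \<in> C \<and> b \<in> C)"
  proof (intro ballI impI)
    fix a b assume "a \<in> V" "b \<in> V" "a \<noteq> b \<and> divgraph_E a b"
    then show "\<exists>C\<in>D ` I. a \<in> C \<and> b \<in> C" using 3 by simp
  qed
  show ?thesis unfolding total_clique_covering_def using 1 c2 c3 by (simp only: simp_thms)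
qed

lemma card_DI: "card (D ` I) = k"
  using card_image[OF D_inj] by simp

lemma tcc_card_ge:
  assumes S: "finite S" "total_clique_covering V divgraph_E S"
  obtains \<phi> where "\<forall>i\<in>I. \<phi> i \<in> S \<and> p i \<in> \<phi> i" "inj_on \<phi> I" "card S \<ge> k"
proof -
  have cov: "\<forall>v\<in>V. \<exists>C\<in>S. v \<in> C" using S(2) unfolding total_clique_covering_def by blast
  have "\<forall>i\<in>I. \<exists>C. C \<in> S \<and> p i \<in> C"
  proof
    fix i assume "i \<in> I"
    then have "p i \<in> V" by (rule p_in_V)
    then show "\<exists>C. C \<in> S \<and> p i \<in> C" using cov by blast
  qed
  from bchoice[OF this] obtain \<phi> where \<phi>: "\<forall>i\<in>I. \<phi> i \<in> S \<and> p i \<in> \<phi> i" by blast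
  have inj: "inj_on \<phi> I"
  proof (rule inj_onI)
    fix i j assume ij: "i \<in> I" "j \<in> I" "\<phi> i = \<phi> j"
    show "i = j"
    proof (rule ccontr)
      assume "i \<noteq> j"
      then have "p i \<noteq> p j" using pinj ij unfolding inj_on_def by blast
      moreover have "is_clique V divgraph_E (\<phi> i)" using S(2) \<phi> ij unfolding total_clique_covering_def by blast
      moreover have "p i \<in> \<phi> i" "p j \<in> \<phi> i" using \<phi> ij by auto
      ultimately have "divgraph_E (p i) (p j)" unfolding is_clique_def by blast
      then show False using p_adj ij \<open>i \<noteq> j\<close> by blast
    qed
  qed
  have "\<phi> ` I \<subseteq> S" using \<phi> by auto
  then have "card (\<phi> ` I) \<le> card S" using S(1) card_mono by blast
  then have "card S \<ge> k" using card_image[OF inj] by simp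
  then show ?thesis using that \<phi> inj by blast
qed

lemma theta_k: "theta_t V divgraph_E = k"
  unfolding theta_t_def
proof (rule Least_equality)
  show "\<exists>S. finite S \<and> total_clique_covering V divgraph_E S \<and> card S = k"
    using D_tcc card_DI by blast
next
  fix m assume "\<exists>S. finite S \<and> total_clique_covering V divgraph_E S \<and> card S = m"
  then obtain S where S: "finite S" "total_clique_covering V divgraph_E S" "card S = m" by blast
  obtain \<phi> where "card S \<ge> k" using tcc_card_ge[OF S(1,2)] .
  then show "k \<le> m" using \<open>card S = m\<close> by simp
qed

lemma tcc_unique:
  assumes S: "finite S" "total_clique_covering V divgraph_E S" "card S = k"
  shows "S = D ` I"
proof -
  obtain \<phi> where \<phi>: "\<forall>i\<in>I. \<phi> i \<in> S \<and> p i \<in> \<phi> i" "inj_on \<phi> I"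
    using tcc_card_ge[OF S(1,2)] by blast
  have sub: "\<phi> ` I \<subseteq> S" using \<phi> by auto
  have SI: "\<phi> ` I = S" using card_subset_eq[OF S(1) sub] card_image[OF \<phi>(2)] S(3) by simp
  have cl: "is_clique V divgraph_E C" if "C \<in> S" for C using S(2) that unfolding total_clique_covering_def by blast
  have pj: "j = i" if "i \<in> I" "j \<in> I" "p i \<in> \<phi> j" for i j
  proof (rule ccontr)
    assume "j \<noteq> i"
    then have "p i \<noteq> p j" using pinj that unfolding inj_on_def by blast
    moreover have "p j \<in> \<phi> j" using \<phi> that by auto
    moreover have "is_clique V divgraph_E (\<phi> j)" using cl \<phi> that by blast
    ultimately have "divgraph_E (p i) (p j)" using that(3) unfolding is_clique_def by blast
    then show False using p_adj that \<open>j \<noteq> i\<close> by blast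
  qed
  have eq: "\<phi> i = D i" if i: "i \<in> I" for i
  proof
    show "\<phi> i \<subseteq> D i"
    proof
      fix x assume x: "x \<in> \<phi> i"
      have cli: "is_clique V divgraph_E (\<phi> i)" using cl \<phi> i by blast
      then have xV: "x \<in> V" using x unfolding is_clique_def by blast
      show "x \<in> D i"
      proof (cases "x = p i")
        case True then show ?thesis using p_in_D i by simp
      next
        case False
        then have ne: "p i \<noteq> x" by simp
        have "p i \<in> \<phi> i" using \<phi> i by blast
        then have "divgraph_E (p i) x" using cli x ne unfolding is_clique_def by blast
        then obtain l where l: "l \<in> I" "p l dvd p i" "p l dvd x"
          using gcd_gt1_common[OF p_in_V[OF i]] unfolding divgraph_E_def by blast
        then have "l = i" using p_dvd_p i by blast
        then show ?thesis using l xV unfolding D_def by blast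
      qed
    qed
    show "D i \<subseteq> \<phi> i"
    proof
      fix x assume x: "x \<in> D i"
      show "x \<in> \<phi> i"
      proof (cases "x = p i")
        case True then show ?thesis using \<phi> i by simp
      next
        case False
        have xV: "x \<in> V" and px: "p i dvd x" using x unfolding D_def by auto
        have "divgraph_E (p i) x" unfolding divgraph_E_def
          using gcd_prime_gt1[OF i _ px] p_gt1[OF i] by simp
        have cov: "\<forall>a\<in>V. \<forall>b\<in>V. a \<noteq> b \<and> divgraph_E a b \<longrightarrow> (\<exists>C\<in>S. a \<in> C \<and> b \<in> C)"
          using S(2) unfolding total_clique_covering_def by blast
        have "p i \<noteq> x" using False by simp
        then obtain C where C: "C \<in> S" "p i \<in> C" "x \<in> C"
          using cov p_in_V[OF i] xV \<open>divgraph_E (p i) x\<close> by blast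
        then obtain j where j: "j \<in> I" "C = \<phi> j" using SI by blast
        then have "j = i" using pj i C by blast
        then show ?thesis using C j by simp
      qed
    qed
  qed
  have "\<phi> ` I = D ` I" by (rule image_cong[OF refl eq])
  then show ?thesis using SI by simp
qed

end


lemma chain_mono:
  fixes s :: "nat \<Rightarrow> nat"
  assumes "\<forall>j. 1 \<le> j \<and> j < k \<longrightarrow> s (Suc j) \<le> s j"
  shows "1 \<le> i \<Longrightarrow> i \<le> j \<Longrightarrow> j \<le> k \<Longrightarrow> s j \<le> s i"
proof (induction j)
  case 0 then show ?case by simp
next
  case (Suc j)
  show ?case
  proof (cases "i = Suc j")
    case True then show ?thesis by simp
  next
    case False
    then have "i \<le> j" using Suc.prems by simp
    then have "s j \<le> s i" using Suc by simp
    moreover have "s (Suc j) \<le> s j" using assms Suc.prems \<open>i \<le> j\<close> by simp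
    ultimately show ?thesis by simp
  qed
qed

lemma downclosed_eq:
  fixes A B :: "nat set"
  assumes "A \<subseteq> {1..k}" "B \<subseteq> {1..k}"
    "\<And>x y. x \<in> A \<Longrightarrow> 1 \<le> y \<Longrightarrow> y \<le> x \<Longrightarrow> y \<in> A"
    "\<And>x y. x \<in> B \<Longrightarrow> 1 \<le> y \<Longrightarrow> y \<le> x \<Longrightarrow> y \<in> B"
    "card A = card B"
  shows "A = B"
proof -
  have fA: "finite A" and fB: "finite B" using assms(1,2) finite_subset by auto
  have "A \<subseteq> B \<or> B \<subseteq> A"
  proof (rule ccontr)
    assume "\<not> (A \<subseteq> B \<or> B \<subseteq> A)"
    then obtain a b where ab: "a \<in> A" "a \<notin> B" "b \<in> B" "b \<notin> A" by blast
    have "1 \<le> a" "1 \<le> b" using ab assms(1,2) by auto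
    show False
    proof (cases "a \<le> b")
      case True then show False using assms(4)[OF ab(3) \<open>1 \<le> a\<close>] ab by blast
    next
      case False then show False using assms(3)[OF ab(1) \<open>1 \<le> b\<close>] ab by simp
    qed
  qed
  then show ?thesis using card_subset_eq fA fB assms(5) by (metis (no_types))
qed

lemma sorted_perm_eq:
  fixes r g :: "nat \<Rightarrow> nat"
  assumes g: "bij_betw g {1..k} {1..k}"
    and rmono: "\<forall>i j. 1 \<le> i \<and> i \<le> j \<and> j \<le> k \<longrightarrow> r j \<le> r i"
    and adj: "\<forall>j. 1 \<le> j \<and> j < k \<longrightarrow> r (g (Suc j)) \<le> r (g j)"
  shows "j \<in> {1..k} \<Longrightarrow> r (g j) = r j"
proof -
  assume j: "j \<in> {1..k}"
  have mono2: "r (g y) \<le> r (g x)" if "1 \<le> x" "x \<le> y" "y \<le> k" for x y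
    using chain_mono[of k "\<lambda>j. r (g j)", OF adj] that by blast
  have thr: "{x\<in>{1..k}. t \<le> r (g x)} = {x\<in>{1..k}. t \<le> r x}" for t
  proof (rule downclosed_eq[of _ k])
    show "{x \<in> {1..k}. t \<le> r (g x)} \<subseteq> {1..k}" "{x \<in> {1..k}. t \<le> r x} \<subseteq> {1..k}" by auto
    show "y \<in> {x \<in> {1..k}. t \<le> r (g x)}" if "x \<in> {x \<in> {1..k}. t \<le> r (g x)}" "1 \<le> y" "y \<le> x" for x y
    proof -
      have "r (g x) \<le> r (g y)" using mono2[of y x] that by simp
      then show ?thesis using that by simp
    qed
    show "y \<in> {x \<in> {1..k}. t \<le> r x}" if "x \<in> {x \<in> {1..k}. t \<le> r x}" "1 \<le> y" "y \<le> x" for x y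
    proof -
      have "r x \<le> r y" using rmono that by simp
      then show ?thesis using that by simp
    qed
    have "g ` {x\<in>{1..k}. t \<le> r (g x)} = {x\<in>{1..k}. t \<le> r x}"
    proof
      show "g ` {x\<in>{1..k}. t \<le> r (g x)} \<subseteq> {x\<in>{1..k}. t \<le> r x}"
        using bij_betw_apply[OF g] by auto
      show "{x\<in>{1..k}. t \<le> r x} \<subseteq> g ` {x\<in>{1..k}. t \<le> r (g x)}"
      proof
        fix y assume y: "y \<in> {x\<in>{1..k}. t \<le> r x}"
        then have "y \<in> g ` {1..k}" using g unfolding bij_betw_def by simp
        then obtain x where x: "x \<in> {1..k}" "g x = y" by blast
        then show "y \<in> g ` {x\<in>{1..k}. t \<le> r (g x)}" using y by blast
      qed
    qed
    moreover have "inj_on g {x\<in>{1..k}. t \<le> r (g x)}"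
    proof (rule inj_on_subset)
      show "inj_on g {1..k}" using g unfolding bij_betw_def by blast
    qed auto
    ultimately show "card {x\<in>{1..k}. t \<le> r (g x)} = card {x\<in>{1..k}. t \<le> r x}"
      using card_image by fastforce
  qed
  have "r j \<le> r (g j)" using thr[of "r j"] j by blast
  moreover have "r (g j) \<le> r j" using thr[of "r (g j)"] j by blast
  ultimately show "r (g j) = r j" by simp
qed


context dg begin

definition Lh :: "(nat \<Rightarrow> nat) \<Rightarrow> nat \<Rightarrow> nat" where
  "Lh h d = (\<Prod>a\<in>h ` supp d. qprime a)"

lemma supp_sub: "supp d \<subseteq> I" unfolding supp_def by blast

lemma finite_supp: "finite (supp d)" using supp_sub finite_subset by blast

lemma finite_V: "finite V"
proof -
  have "V \<subseteq> {..n}" unfolding divgraph_V_def using n_pos by (auto dest: dvd_imp_le)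
  then show ?thesis using finite_subset by blast
qed

lemma D_supp: "d \<in> V \<Longrightarrow> {C\<in>D ` I. d \<in> C} = D ` supp d"
  unfolding D_def supp_def by auto

lemma vertex_label_eq:
  assumes np: "\<not> prime n" and f: "bij_betw f (D ` I) {1..k}" and d: "d \<in> V"
  shows "vertex_label V divgraph_E (D ` I) f d = Lh (\<lambda>i. f (D i)) d"
proof -
  have niso: "d \<notin> isolated_vertices V divgraph_E" using no_isolated[OF np] by simp
  have nic: "nonisolated_cliques V divgraph_E (D ` I) = D ` I"
    unfolding nonisolated_cliques_def using no_isolated[OF np] by simp
  have "vertex_label V divgraph_E (D ` I) f d = (\<Prod>C\<in>D ` supp d. qprime (f C))"
    unfolding vertex_label_def using niso nic D_supp[OF d] by simp
  also have "\<dots> = (\<Prod>i\<in>supp d. qprime (f (D i)))"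
    using prod.reindex[OF inj_on_subset[OF D_inj supp_sub]] by simp
  also have "\<dots> = (\<Prod>a\<in>(\<lambda>i. f (D i)) ` supp d. qprime a)"
  proof -
    have "inj_on f (D ` I)" using f bij_betw_def by blast
    then have "inj_on (\<lambda>i. f (D i)) I" using D_inj comp_inj_on[of D I f] by (simp add: o_def)
    then have "inj_on (\<lambda>i. f (D i)) (supp d)" using inj_on_subset supp_sub by blast
    from prod.reindex[OF this, of qprime] show ?thesis by (simp add: o_def)
  qed
  finally show ?thesis unfolding Lh_def .
qed

lemma label_seq_eq:
  assumes np: "\<not> prime n" and f: "bij_betw f (D ` I) {1..k}"
  shows "label_seq V divgraph_E (D ` I) f = sorted_list_of_multiset (image_mset (Lh (\<lambda>i. f (D i))) (mset_set V))"
proof -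
  have "image_mset (vertex_label V divgraph_E (D ` I) f) (mset_set V) = image_mset (Lh (\<lambda>i. f (D i))) (mset_set V)"
    by (rule image_mset_cong) (use vertex_label_eq[OF np f] finite_V in simp)
  then show ?thesis unfolding label_seq_def by simp
qed

lemma hbij:
  assumes f: "bij_betw f (D ` I) {1..k}"
  shows "bij_betw (\<lambda>i. f (D i)) I I"
proof -
  have "bij_betw D I (D ` I)" using D_inj by (simp add: bij_betw_imageI)
  then have "bij_betw (f \<circ> D) I {1..k}" using bij_betw_trans f by blast
  then show ?thesis by (simp add: o_def)
qed

lemma monomial_Lh:
  assumes h: "bij_betw h I I"
  shows "monomial_of (Lh h d) = h ` supp d"
proof -
  have "h ` supp d \<subseteq> I" using h supp_sub bij_betw_apply by fastforce
  then have "\<forall>a\<in>h ` supp d. 1 \<le> a" by auto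
  moreover have "finite (h ` supp d)" using finite_supp by simp
  ultimately show ?thesis unfolding Lh_def by (rule monomial_of_prod[rotated])
qed

lemma Lh_eq_q:
  assumes h: "bij_betw h I I" and j: "1 \<le> j"
  shows "Lh h d = qprime j \<longleftrightarrow> h ` supp d = {j}"
proof
  assume e: "Lh h d = qprime j"
  have "monomial_of (qprime j) = {j}" using monomial_of_prod[of "{j}"] j by simp
  then show "h ` supp d = {j}" using monomial_Lh[OF h, of d] e by simp
next
  assume "h ` supp d = {j}"
  then show "Lh h d = qprime j" unfolding Lh_def by simp
qed

end


definition tau :: "nat \<Rightarrow> nat \<Rightarrow> nat" where
  "tau j x = (if x = j then Suc j else if x = Suc j then j else x)"

lemma tau_tau: "tau j (tau j x) = x" unfolding tau_def by auto

lemma tau_fix: "j \<notin> A \<Longrightarrow> Suc j \<notin> A \<Longrightarrow> tau j ` A = A"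
proof -
  assume "j \<notin> A" "Suc j \<notin> A"
  then have "\<forall>x\<in>A. tau j x = x" unfolding tau_def by auto
  then show ?thesis by simp
qed

lemma tau_bij: "1 \<le> j \<Longrightarrow> j < k \<Longrightarrow> bij_betw (tau j) {1..k} {1..k}"
proof -
  assume j: "1 \<le> j" "j < k"
  have inj: "inj (tau j)" by (metis tau_tau injI)
  have "tau j ` {1..k} \<subseteq> {1..k}" using j unfolding tau_def by auto
  moreover have "{1..k} \<subseteq> tau j ` {1..k}"
  proof
    fix x assume "x \<in> {1..k}"
    moreover then have "tau j x \<in> {1..k}" using j unfolding tau_def by auto
    ultimately show "x \<in> tau j ` {1..k}" using tau_tau by (metis image_eqI)
  qed
  ultimately show ?thesis unfolding bij_betw_def using inj inj_on_subset by blast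
qed

lemma img_single:
  assumes "inj_on h I" "X \<subseteq> I" "b \<in> I"
  shows "h ` X = {h b} \<longleftrightarrow> X = {b}"
proof
  assume e: "h ` X = {h b}"
  have "x = b" if "x \<in> X" for x
  proof -
    have "h x = h b" using e that by blast
    moreover have "x \<in> I" using assms(2) that by blast
    ultimately show ?thesis using inj_onD[OF assms(1)] assms(3) by blast
  qed
  moreover have "X \<noteq> {}" using e by (metis image_empty empty_not_insert)
  ultimately show "X = {b}" by auto
qed simp

context dg begin

lemma Lh_small:
  assumes "Lh h d < qprime j" "1 \<le> j"
  shows "j \<notin> h ` supp d" "Suc j \<notin> h ` supp d"
proof -
  have fin: "finite (h ` supp d)" using finite_supp by simp
  show "j \<notin> h ` supp d"
  proof
    assume "j \<in> h ` supp d"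
    then have "qprime j \<le> Lh h d" unfolding Lh_def using prod_qprime_ge[OF fin] by blast
    then show False using assms by simp
  qed
  show "Suc j \<notin> h ` supp d"
  proof
    assume "Suc j \<in> h ` supp d"
    then have "qprime (Suc j) \<le> Lh h d" unfolding Lh_def using prod_qprime_ge[OF fin] by blast
    moreover have "qprime j < qprime (Suc j)" using qprime_less assms(2) by simp
    ultimately show False using assms by simp
  qed
qed

lemma count_lab:
  "count (mset (sorted_list_of_multiset (image_mset L (mset_set V)))) u = card {d\<in>V. L d = u}"
  using count_image_mset_set[OF finite_V] by simp

lemma swap_less:
  assumes np: "\<not> prime n" and f0: "bij_betw f0 (D ` I) {1..k}"
    and j: "1 \<le> j" "j < k"
    and a: "a \<in> I" "f0 (D a) = j" and b: "b \<in> I" "f0 (D b) = Suc j"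
    and rab: "r a < r b"
  shows "bij_betw (tau j \<circ> f0) (D ` I) {1..k}"
    "label_seq V divgraph_E (D ` I) (tau j \<circ> f0) < label_seq V divgraph_E (D ` I) f0"
proof -
  show f1: "bij_betw (tau j \<circ> f0) (D ` I) {1..k}" using bij_betw_trans[OF f0 tau_bij[OF j]] .
  define h0 where "h0 = (\<lambda>i. f0 (D i))"
  define h1 where "h1 = (\<lambda>i. tau j (h0 i))"
  have h0b: "bij_betw h0 I I" unfolding h0_def using hbij[OF f0] .
  have h1b: "bij_betw h1 I I" unfolding h1_def h0_def using hbij[OF f1] by (simp add: o_def)
  have h1img: "h1 ` X = tau j ` (h0 ` X)" for X unfolding h1_def by (simp add: image_image)
  have h0img: "h0 ` X = tau j ` (h1 ` X)" for X unfolding h1_def by (simp add: image_image tau_tau)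
  have L1: "label_seq V divgraph_E (D ` I) (tau j \<circ> f0) = sorted_list_of_multiset (image_mset (Lh h1) (mset_set V))"
    using label_seq_eq[OF np f1] unfolding h1_def h0_def by (simp add: o_def)
  have L0: "label_seq V divgraph_E (D ` I) f0 = sorted_list_of_multiset (image_mset (Lh h0) (mset_set V))"
    using label_seq_eq[OF np f0] unfolding h0_def by simp
  have inj0: "inj_on h0 I" using h0b bij_betw_def by blast
  show "label_seq V divgraph_E (D ` I) (tau j \<circ> f0) < label_seq V divgraph_E (D ` I) f0"
    unfolding L0 L1
  proof (rule sorted_lex_less[where v = "qprime j"])
    show "sorted (sorted_list_of_multiset (image_mset (Lh h1) (mset_set V)))" by simp
    show "sorted (sorted_list_of_multiset (image_mset (Lh h0) (mset_set V)))" by simp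
    show "length (sorted_list_of_multiset (image_mset (Lh h1) (mset_set V))) =
          length (sorted_list_of_multiset (image_mset (Lh h0) (mset_set V)))"
      by (metis size_image_mset size_mset mset_sorted_list_of_multiset)
    show "\<forall>u<qprime j. count (mset (sorted_list_of_multiset (image_mset (Lh h1) (mset_set V)))) u =
          count (mset (sorted_list_of_multiset (image_mset (Lh h0) (mset_set V)))) u"
    proof (intro allI impI)
      fix u assume u: "u < qprime j"
      have "{d\<in>V. Lh h1 d = u} = {d\<in>V. Lh h0 d = u}"
      proof (intro Collect_cong conj_cong refl)
        fix d
        show "(Lh h1 d = u) = (Lh h0 d = u)"
        proof
          assume e: "Lh h1 d = u"
          then have "Lh h1 d < qprime j" using u by simp
          from Lh_small[OF this j(1)] have "tau j ` (h1 ` supp d) = h1 ` supp d" by (rule tau_fix)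
          then have "h0 ` supp d = h1 ` supp d" using h0img by simp
          then show "Lh h0 d = u" using e unfolding Lh_def by simp
        next
          assume e: "Lh h0 d = u"
          then have "Lh h0 d < qprime j" using u by simp
          from Lh_small[OF this j(1)] have "tau j ` (h0 ` supp d) = h0 ` supp d" by (rule tau_fix)
          then have "h1 ` supp d = h0 ` supp d" using h1img by simp
          then show "Lh h1 d = u" using e unfolding Lh_def by simp
        qed
      qed
      then show "count (mset (sorted_list_of_multiset (image_mset (Lh h1) (mset_set V)))) u =
          count (mset (sorted_list_of_multiset (image_mset (Lh h0) (mset_set V)))) u"
        unfolding count_lab by simp
    qed
    have c0: "{d\<in>V. Lh h0 d = qprime j} = {d\<in>V. supp d = {a}}"
    proof (intro Collect_cong conj_cong refl)
      fix d
      have "Lh h0 d = qprime j \<longleftrightarrow> h0 ` supp d = {h0 a}" using Lh_eq_q[OF h0b j(1)] a unfolding h0_def by simp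
      also have "\<dots> \<longleftrightarrow> supp d = {a}" using img_single[OF inj0 supp_sub a(1)] .
      finally show "Lh h0 d = qprime j \<longleftrightarrow> supp d = {a}" .
    qed
    have c1: "{d\<in>V. Lh h1 d = qprime j} = {d\<in>V. supp d = {b}}"
    proof (intro Collect_cong conj_cong refl)
      fix d
      have "Lh h1 d = qprime j \<longleftrightarrow> h1 ` supp d = {j}" using Lh_eq_q[OF h1b j(1)] by simp
      also have "\<dots> \<longleftrightarrow> h0 ` supp d = {Suc j}"
      proof
        assume "h1 ` supp d = {j}"
        then show "h0 ` supp d = {Suc j}" using h0img[of "supp d"] by (simp add: tau_def)
      next
        assume "h0 ` supp d = {Suc j}"
        then show "h1 ` supp d = {j}" using h1img[of "supp d"] by (simp add: tau_def)
      qed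
      also have "\<dots> \<longleftrightarrow> h0 ` supp d = {h0 b}" using b unfolding h0_def by simp
      also have "\<dots> \<longleftrightarrow> supp d = {b}" using img_single[OF inj0 supp_sub b(1)] .
      finally show "Lh h1 d = qprime j \<longleftrightarrow> supp d = {b}" .
    qed
    have "card {d\<in>V. supp d = {a}} = r a" using count_supp[of "{a}"] a(1) by simp
    moreover have "card {d\<in>V. supp d = {b}} = r b" using count_supp[of "{b}"] b(1) by simp
    ultimately show "count (mset (sorted_list_of_multiset (image_mset (Lh h0) (mset_set V)))) (qprime j) <
          count (mset (sorted_list_of_multiset (image_mset (Lh h1) (mset_set V)))) (qprime j)"
      unfolding count_lab c0 c1 using rab by simp
  qed
qed

end


lemma vertex_label_restrict:
  "vertex_label V E S f v = vertex_label V E S (restrict f S) v"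
proof -
  have "nonisolated_cliques V E S \<subseteq> S" unfolding nonisolated_cliques_def by blast
  then have "(\<Prod>C\<in>{C \<in> nonisolated_cliques V E S. v \<in> C}. qprime (f C)) =
             (\<Prod>C\<in>{C \<in> nonisolated_cliques V E S. v \<in> C}. qprime (restrict f S C))"
    by (intro prod.cong refl) auto
  then show ?thesis unfolding vertex_label_def by simp
qed

lemma label_seq_restrict:
  "label_seq V E S f = label_seq V E S (restrict f S)"
proof -
  have "vertex_label V E S f = vertex_label V E S (restrict f S)"
    by (rule ext) (rule vertex_label_restrict)
  then show ?thesis unfolding label_seq_def by simp
qed

lemma Min_label_exists:
  assumes "finite A" "finite B" "card A = card B"
  obtains f0 where "bij_betw f0 A B"
    "Min {label_seq V E A f | f. bij_betw f A B} = label_seq V E A f0"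
    "\<And>f. bij_betw f A B \<Longrightarrow> label_seq V E A f0 \<le> label_seq V E A f"
proof -
  define X where "X = {label_seq V E A f | f. bij_betw f A B}"
  have "X \<subseteq> (\<lambda>f. label_seq V E A f) ` (PiE A (\<lambda>_. B))"
  proof
    fix x assume "x \<in> X"
    then obtain f where f: "bij_betw f A B" "x = label_seq V E A f" unfolding X_def by blast
    have "restrict f A \<in> PiE A (\<lambda>_. B)" using f(1) bij_betw_apply by fastforce
    moreover have "x = label_seq V E A (restrict f A)" using f(2) label_seq_restrict by metis
    ultimately show "x \<in> (\<lambda>f. label_seq V E A f) ` (PiE A (\<lambda>_. B))" by blast
  qed
  moreover have "finite (PiE A (\<lambda>_. B))" using assms(1,2) by (simp add: finite_PiE)
  ultimately have fin: "finite X" using finite_subset by blast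
  obtain f where "bij_betw f A B" using finite_same_card_bij[OF assms] by blast
  then have ne: "X \<noteq> {}" unfolding X_def by blast
  have "Min X \<in> X" using Min_in[OF fin ne] .
  then obtain f0 where f0: "bij_betw f0 A B" "Min X = label_seq V E A f0" unfolding X_def by blast
  have "label_seq V E A f0 \<le> label_seq V E A f" if "bij_betw f A B" for f
  proof -
    have "label_seq V E A f \<in> X" unfolding X_def using that by blast
    then show ?thesis using Min_le[OF fin] f0(2) by metis
  qed
  then show ?thesis using that f0 unfolding X_def by blast
qed

lemma img_id: "(\<And>x. x \<in> A \<Longrightarrow> f x = x) \<Longrightarrow> f ` A = A"
proof -
  assume "\<And>x. x \<in> A \<Longrightarrow> f x = x"
  then have "f ` A = id ` A" by (intro image_cong) auto
  then show ?thesis by simp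
qed

context dg begin

lemma sigma_code_np:
  assumes np: "\<not> prime n"
  shows "sigma_code V divgraph_E = sigma_S V divgraph_E (D ` I)"
proof -
  have "{sigma_S V divgraph_E S | S. finite S \<and> total_clique_covering V divgraph_E S \<and> card S = theta_t V divgraph_E}
        = {sigma_S V divgraph_E (D ` I)}"
  proof
    show "{sigma_S V divgraph_E S | S. finite S \<and> total_clique_covering V divgraph_E S \<and> card S = theta_t V divgraph_E}
        \<subseteq> {sigma_S V divgraph_E (D ` I)}" using tcc_unique theta_k by auto
    have "finite (D ` I)" by simp
    then show "{sigma_S V divgraph_E (D ` I)} \<subseteq> {sigma_S V divgraph_E S | S. finite S \<and> total_clique_covering V divgraph_E S \<and> card S = theta_t V divgraph_E}"
      using D_tcc card_DI theta_k by auto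
  qed
  then show ?thesis unfolding sigma_code_def by simp
qed

lemma main_np:
  assumes np: "\<not> prime n"
  shows "F_G n = (\<Sum>J \<in> Pow I - {{}}. replicate_mset (\<Prod>i\<in>J. r i) J)"
proof -
  have nic: "nonisolated_cliques V divgraph_E (D ` I) = D ` I"
    unfolding nonisolated_cliques_def using no_isolated[OF np] by simp
  have th: "theta_t V divgraph_E - card (isolated_vertices V divgraph_E) = k"
    using theta_k no_isolated[OF np] by simp
  have cards: "card (D ` I) = card {1..k}" using card_DI by simp
  obtain f0 where f0: "bij_betw f0 (D ` I) {1..k}"
    "Min {label_seq V divgraph_E (D ` I) f | f. bij_betw f (D ` I) {1..k}} = label_seq V divgraph_E (D ` I) f0"
    "\<And>f. bij_betw f (D ` I) {1..k} \<Longrightarrow> label_seq V divgraph_E (D ` I) f0 \<le> label_seq V divgraph_E (D ` I) f"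
    by (rule Min_label_exists[OF finite_imageI[OF finite_atLeastAtMost] finite_atLeastAtMost cards]) blast
  have sc: "sigma_code V divgraph_E = label_seq V divgraph_E (D ` I) f0"
    using sigma_code_np[OF np] f0(2) unfolding sigma_S_def nic th by simp
  define h0 where "h0 = (\<lambda>i. f0 (D i))"
  have h0b: "bij_betw h0 I I" unfolding h0_def using hbij[OF f0(1)] .
  have inj0: "inj_on h0 I" using bij_betw_imp_inj_on[OF h0b] .
  have im0: "h0 ` I = I" using bij_betw_imp_surj_on[OF h0b] .
  define g where "g = the_inv_into I h0"
  have gb: "bij_betw g I I" unfolding g_def using bij_betw_the_inv_into[OF h0b] .
  have gh: "g (h0 i) = i" if "i \<in> I" for i unfolding g_def using the_inv_into_f_f[OF inj0 that] .
  have hg: "h0 (g j) = j" if "j \<in> I" for j unfolding g_def using f_the_inv_into_f[OF inj0] that im0 by simp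
  have gI: "g j \<in> I" if "j \<in> I" for j using gb that bij_betw_apply by fastforce
  have adj: "\<forall>j. 1 \<le> j \<and> j < k \<longrightarrow> r (g (Suc j)) \<le> r (g j)"
  proof (intro allI impI)
    fix j assume j: "1 \<le> j \<and> j < k"
    have jI: "j \<in> I" "Suc j \<in> I" using j by auto
    show "r (g (Suc j)) \<le> r (g j)"
    proof (rule ccontr)
      assume "\<not> r (g (Suc j)) \<le> r (g j)"
      then have lt: "r (g j) < r (g (Suc j))" by simp
      have a: "g j \<in> I" "f0 (D (g j)) = j" using gI hg jI unfolding h0_def by auto
      have b: "g (Suc j) \<in> I" "f0 (D (g (Suc j))) = Suc j" using gI hg jI unfolding h0_def by auto
      have j1: "1 \<le> j" "j < k" using j by auto
      note sw = swap_less[OF np f0(1) j1 a b lt]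
      have "label_seq V divgraph_E (D ` I) f0 \<le> label_seq V divgraph_E (D ` I) (tau j \<circ> f0)"
        using f0(3)[OF sw(1)] .
      then show False using sw(2) by simp
    qed
  qed
  have rg: "r (g j) = r j" if "j \<in> I" for j
    using sorted_perm_eq[OF gb rmono adj] that by blast
  have rh: "r (h0 i) = r i" if "i \<in> I" for i
  proof -
    have "h0 i \<in> I" using h0b that bij_betw_apply by fastforce
    then have "r (g (h0 i)) = r (h0 i)" using rg by blast
    then show ?thesis using gh that by simp
  qed
  have "F_G n = image_mset monomial_of (image_mset (Lh h0) (mset_set V))"
    unfolding F_G_def normal_poly_rep_def sc label_seq_eq[OF np f0(1)] h0_def by simp
  also have "\<dots> = image_mset (\<lambda>d. h0 ` supp d) (mset_set V)"
    by (simp add: multiset.map_comp o_def monomial_Lh[OF h0b])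
  also have "\<dots> = (\<Sum>J \<in> Pow I - {{}}. replicate_mset (\<Prod>i\<in>J. r i) J)"
  proof (rule multiset_eqI)
    fix J'
    have finP: "finite (Pow I - {{}})" by simp
    have rhs: "count (\<Sum>J \<in> Pow I - {{}}. replicate_mset (\<Prod>i\<in>J. r i) J) J'
          = (if J' \<in> Pow I - {{}} then (\<Prod>i\<in>J'. r i) else 0)"
    proof -
      have "count (\<Sum>J \<in> Pow I - {{}}. replicate_mset (\<Prod>i\<in>J. r i) J) J'
          = (\<Sum>J \<in> Pow I - {{}}. if J' = J then (\<Prod>i\<in>J. r i) else 0)"
        unfolding count_sum by (intro sum.cong refl) simp
      also have "\<dots> = (if J' \<in> Pow I - {{}} then (\<Prod>i\<in>J'. r i) else 0)"
        using sum.delta[OF finP, of J' "\<lambda>J. \<Prod>i\<in>J. r i"] by simp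
      finally show ?thesis .
    qed
    have lhs: "count (image_mset (\<lambda>d. h0 ` supp d) (mset_set V)) J' = card {d\<in>V. h0 ` supp d = J'}"
      using count_image_mset_set[OF finite_V] .
    show "count (image_mset (\<lambda>d. h0 ` supp d) (mset_set V)) J' =
          count (\<Sum>J \<in> Pow I - {{}}. replicate_mset (\<Prod>i\<in>J. r i) J) J'"
    proof (cases "J' \<in> Pow I - {{}}")
      case True
      then have J': "J' \<subseteq> I" "J' \<noteq> {}" by auto
      have gJ: "g ` J' \<subseteq> I" "g ` J' \<noteq> {}" using gI J' by auto
      have "{d\<in>V. h0 ` supp d = J'} = {d\<in>V. supp d = g ` J'}"
      proof (intro Collect_cong conj_cong refl)
        fix d
        show "h0 ` supp d = J' \<longleftrightarrow> supp d = g ` J'"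
        proof
          assume e: "h0 ` supp d = J'"
          have "g ` (h0 ` supp d) = supp d"
            unfolding image_image using gh supp_sub by (intro img_id) blast
          then show "supp d = g ` J'" using e by simp
        next
          assume e: "supp d = g ` J'"
          have "h0 ` (g ` J') = J'" unfolding image_image using hg J'(1) by (intro img_id) blast
          then show "h0 ` supp d = J'" using e by simp
        qed
      qed
      then have "card {d\<in>V. h0 ` supp d = J'} = (\<Prod>i\<in>g ` J'. r i)" using count_supp[OF gJ] by simp
      also have "\<dots> = (\<Prod>j\<in>J'. r (g j))"
      proof -
        have "inj_on g J'" using inj_on_subset[OF bij_betw_imp_inj_on[OF gb] J'(1)] .
        from prod.reindex[OF this, of r] show ?thesis by (simp add: o_def)
      qed
      also have "\<dots> = (\<Prod>j\<in>J'. r j)" using rg J'(1) by (intro prod.cong refl) blast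
      finally show ?thesis using lhs rhs True by simp
    next
      case False
      have emp: "{d\<in>V. h0 ` supp d = J'} = {}"
      proof -
        have "h0 ` supp d \<noteq> J'" if "d \<in> V" for d
        proof -
          have "h0 ` supp d \<subseteq> I" using image_mono[OF supp_sub, of h0] im0 by simp
          moreover have "h0 ` supp d \<noteq> {}" using V_supp[OF that] by simp
          ultimately show ?thesis using False by blast
        qed
        then show ?thesis by blast
      qed
      have "count (image_mset (\<lambda>d. h0 ` supp d) (mset_set V)) J' = 0" unfolding lhs emp by (rule card.empty)
      moreover have "count (\<Sum>J \<in> Pow I - {{}}. replicate_mset (\<Prod>i\<in>J. r i) J) J' = 0"
        unfolding rhs using False by (rule if_not_P)
      ultimately show ?thesis by simp
    qed
  qed
  finally show ?thesis .
qed

end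


lemma main_prime:
  fixes n :: nat
  assumes pn: "prime n"
  shows "F_G n = {#{}#}"
proof -
  have V: "divgraph_V n = {n}"
  proof
    show "divgraph_V n \<subseteq> {n}"
    proof
      fix d assume "d \<in> divgraph_V n"
      then have "d dvd n" "d > 1" unfolding divgraph_V_def by auto
      then show "d \<in> {n}" using pn prime_nat_iff by auto
    qed
    show "{n} \<subseteq> divgraph_V n" using pn prime_gt_1_nat unfolding divgraph_V_def by auto
  qed
  have iso: "isolated_vertices {n} divgraph_E = {n}" unfolding isolated_vertices_def by auto
  have cl: "is_clique {n} divgraph_E {n}" unfolding is_clique_def by auto
  have tcc1: "total_clique_covering {n} divgraph_E {{n}}"
    unfolding total_clique_covering_def using cl by auto
  have th: "theta_t {n} divgraph_E = 1"
    unfolding theta_t_def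
  proof (rule Least_equality)
    show "\<exists>S. finite S \<and> total_clique_covering {n} divgraph_E S \<and> card S = 1" using tcc1 by force
  next
    fix m assume "\<exists>S. finite S \<and> total_clique_covering {n} divgraph_E S \<and> card S = m"
    then obtain S where S: "finite S" "total_clique_covering {n} divgraph_E S" "card S = m" by blast
    have "\<exists>C\<in>S. n \<in> C" using S(2) unfolding total_clique_covering_def by blast
    then have "S \<noteq> {}" by blast
    then have "card S > 0" using S(1) card_gt_0_iff by blast
    then show "1 \<le> m" using S(3) by simp
  qed
  have uniq: "S = {{n}}" if S: "finite S" "total_clique_covering {n} divgraph_E S" "card S = 1" for S
  proof -
    obtain C where C: "S = {C}" using S(3) card_1_singletonE by blast
    have "n \<in> C" using S(2) C unfolding total_clique_covering_def by blast
    moreover have "C \<subseteq> {n}" using S(2) C unfolding total_clique_covering_def is_clique_def by blast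
    ultimately show ?thesis using C by blast
  qed
  have nic: "nonisolated_cliques {n} divgraph_E {{n}} = {}" unfolding nonisolated_cliques_def iso by simp
  have lab: "label_seq {n} divgraph_E {{n}} f = [1]" for f
    unfolding label_seq_def vertex_label_def iso by simp
  have sS: "sigma_S {n} divgraph_E {{n}} = [1]"
  proof -
    have "{label_seq {n} divgraph_E {{n}} f | f.
      bij_betw f (nonisolated_cliques {n} divgraph_E {{n}}) {1..theta_t {n} divgraph_E - card (isolated_vertices {n} divgraph_E)}} = {[1]}"
    proof -
      have ex: "\<exists>f::nat set \<Rightarrow> nat. bij_betw f {} {}" by (rule exI[of _ "\<lambda>_. 0"]) (simp add: bij_betw_def)
      show ?thesis unfolding nic th iso lab using ex by auto
    qed
    then show ?thesis unfolding sigma_S_def by simp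
  qed
  have "{sigma_S {n} divgraph_E S | S. finite S \<and> total_clique_covering {n} divgraph_E S \<and> card S = theta_t {n} divgraph_E}
      = {[1]}"
    unfolding th
  proof
    show "{sigma_S {n} divgraph_E S | S. finite S \<and> total_clique_covering {n} divgraph_E S \<and> card S = 1} \<subseteq> {[1]}"
      using uniq sS by auto
    have "[1] = sigma_S {n} divgraph_E {{n}} \<and> finite {{n}} \<and> total_clique_covering {n} divgraph_E {{n}} \<and> card {{n}} = (1::nat)"
      using sS tcc1 by simp
    then show "{[1]} \<subseteq> {sigma_S {n} divgraph_E S | S. finite S \<and> total_clique_covering {n} divgraph_E S \<and> card S = 1}"
      by blast
  qed
  then have sc: "sigma_code {n} divgraph_E = [1]" unfolding sigma_code_def by simp
  have m1: "monomial_of 1 = {}" using monomial_of_prod[of "{}"] by simp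
  show ?thesis unfolding F_G_def normal_poly_rep_def V sc using m1 by simp
qed

theorem theorem5:
  fixes n k :: nat and p r :: "nat \<Rightarrow> nat"
  assumes "k \<ge> 1"
    and "\<forall>i\<in>{1..k}. prime (p i)"
    and "inj_on p {1..k}"
    and "\<forall>i\<in>{1..k}. r i \<ge> 1"
    and "\<forall>i j. 1 \<le> i \<and> i \<le> j \<and> j \<le> k \<longrightarrow> r j \<le> r i"
    and "n = (\<Prod>i=1..k. p i ^ r i)"
  shows "(\<not> prime n \<longrightarrow>
            F_G n = (\<Sum>J \<in> Pow {1..k} - {{}}. replicate_mset (\<Prod>i\<in>J. r i) J))
       \<and> (prime n \<longrightarrow> F_G n = {#{}#})"
proof -
  interpret dg n k p r using assms by unfold_locales
  show ?thesis using main_np main_prime by blast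
qed


end
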